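(* Let $\mathcal{A}$ be a nonnegative combinatorially symmetric weakly irreducible tensor of order $m$ and dimension $n$ which is spectral $\ell$-symmetric, and let $j\in\{0,1,\ldots,\ell-1\}$. Let $y$ be an eigenvector of $\mathcal{A}$ for the eigenvalue $\lambda_j=\rho(\mathcal{A})e^{\mathrm{i}2\pi j/\ell}$ with $y_1=1$, and write $y_i/|y_i|=e^{\mathrm{i}\frac{2\pi}{m}\phi_i}$ with $\phi_i\in\{0,1,\dots,m-1\}$, $\phi=(\phi_1,\dots,\phi_n)\in\mathbb{Z}_m^n$. Then $B_{\mathcal{A}}\phi=\frac{mj}{\ell}\mathbb{1}$ over $\mathbb{Z}_m$, where $\mathbb{1}$ is the all-one vector.
   Context: Tensors: order $m$, dimension $n$, entries $a_{i_1\cdots i_m}$. Eigenvalue/eigenvector: $\mathcal{A}x^{m-1}=\lambda x^{[m-1]}$, $x\ne0$, with $(\mathcal{A}x^{m-1})_i=\sum a_{ii_2\cdots i_m}x_{i_2}\cdots x_{i_m}$, $x^{[m-1]}=(x_i^{m-1})$. $\rho(\mathcal{A})$: largest modulus of eigenvalues (roots of the resultant-based characteristic polynomial $\det(\lambda\mathcal{I}-\mathcal{A})$, whose multiset of roots is $\mathrm{Spec}(\mathcal{A})$). Spectral $\ell$-symmetric: $\mathrm{Spec}(\mathcal{A})=e^{\mathrm{i}2\pi/\ell}\mathrm{Spec}(\mathcal{A})$. Weakly irreducible: the digraph on $[n]$ with arc $(i,j)$ whenever some $a_{ii_2\cdots i_m}\ne0$ with $j\in\{i_2,\dots,i_m\}$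 is strongly connected. Combinatorially symmetric: whether $a_{i_1\cdots i_m}\ne0$ is invariant under permuting indices. Known facts used to make the statement meaningful: under these hypotheses $\ell\mid m$, every such eigenvector $y$ has no zero entries, and when $y_1=1$ every $y_i/|y_i|$ is an $m$-th root of unity. Incidence matrix: $E(\mathcal{A})=\{(i_1,\dots,i_m)\in[n]^m: a_{i_1\cdots i_m}\ne0,\ i_1\le\cdots\le i_m\}$; $B_{\mathcal{A}}=(b_{e,j})$ is the $|E(\mathcal{A})|\times n$ matrix with $b_{e,j}=|\{k\in[m]: i_k=j\}|$ for $e=(i_1,\dots,i_m)$, viewed over $\mathbb{Z}_m$. *)

theory Defs
  imports "HOL-Analysis.Analysis" "HOL-Library.Multiset"
begin

text \<open>A tensor of order m and dimension n is a function on index lists; only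
lists of length m with entries in {0..<n} are meaningful (indices are 0-based,
so the paper's index 1 is our index 0).\<close>

type_synonym tensor = "nat list \<Rightarrow> real"

definition idx :: "nat \<Rightarrow> nat \<Rightarrow> nat list set" where
  "idx k n = {is. length is = k \<and> (\<forall>t\<in>set is. t < n)}"

definition nonneg_tensor :: "nat \<Rightarrow> nat \<Rightarrow> tensor \<Rightarrow> bool" where
  "nonneg_tensor m n A \<longleftrightarrow> (\<forall>is\<in>idx m n. A is \<ge> 0)"

definition tmult :: "nat \<Rightarrow> nat \<Rightarrow> tensor \<Rightarrow> (nat \<Rightarrow> complex) \<Rightarrow> nat \<Rightarrow> complex" where
  "tmult m n A x i = (\<Sum>is\<in>idx (m - 1) n. complex_of_real (A (i # is)) * (\<Prod>t<m - 1. x (is ! t)))"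

definition is_eigenpair :: "nat \<Rightarrow> nat \<Rightarrow> tensor \<Rightarrow> complex \<Rightarrow> (nat \<Rightarrow> complex) \<Rightarrow> bool" where
  "is_eigenpair m n A lam x \<longleftrightarrow>
     (\<exists>i<n. x i \<noteq> 0) \<and> (\<forall>i<n. tmult m n A x i = lam * x i ^ (m - 1))"

definition tensor_eigenvalues :: "nat \<Rightarrow> nat \<Rightarrow> tensor \<Rightarrow> complex set" where
  "tensor_eigenvalues m n A = {lam. \<exists>x. is_eigenpair m n A lam x}"

definition spectral_radius :: "nat \<Rightarrow> nat \<Rightarrow> tensor \<Rightarrow> real" where
  "spectral_radius m n A = Sup (cmod ` tensor_eigenvalues m n A)"

definition spectral_sym :: "nat \<Rightarrow> nat \<Rightarrow> tensor \<Rightarrow> nat \<Rightarrow> bool" where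
  "spectral_sym m n A l \<longleftrightarrow>
     tensor_eigenvalues m n A = (\<lambda>z. cis (2 * pi / real l) * z) ` tensor_eigenvalues m n A"

definition arcs :: "nat \<Rightarrow> nat \<Rightarrow> tensor \<Rightarrow> (nat \<times> nat) set" where
  "arcs m n A = {(i, j). i < n \<and> j < n \<and>
      (\<exists>is\<in>idx (m - 1) n. A (i # is) \<noteq> 0 \<and> j \<in> set is)}"

definition weakly_irreducible :: "nat \<Rightarrow> nat \<Rightarrow> tensor \<Rightarrow> bool" where
  "weakly_irreducible m n A \<longleftrightarrow> (\<forall>i<n. \<forall>j<n. (i, j) \<in> (arcs m n A)\<^sup>*)"

definition comb_symmetric :: "nat \<Rightarrow> nat \<Rightarrow> tensor \<Rightarrow> bool" where
  "comb_symmetric m n A \<longleftrightarrow>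
     (\<forall>is\<in>idx m n. \<forall>js\<in>idx m n. mset is = mset js \<longrightarrow> (A is \<noteq> 0 \<longleftrightarrow> A js \<noteq> 0))"

definition edges :: "nat \<Rightarrow> nat \<Rightarrow> tensor \<Rightarrow> nat list set" where
  "edges m n A = {e\<in>idx m n. A e \<noteq> 0 \<and> sorted e}"

definition incid :: "nat \<Rightarrow> nat list \<Rightarrow> nat \<Rightarrow> nat" where
  "incid m e j = card {k. k < m \<and> e ! k = j}"

end

theory Submission
  imports Defs "HOL-Homology.Brouwer_Degree"
begin


definition Sph :: "nat \<Rightarrow> (nat \<Rightarrow> real) set" where
  "Sph n = {x. (\<Sum>i<n. (x i)\<^sup>2) = 1 \<and> (\<forall>i\<ge>n. x i = 0)}"

lemma Sph_noncontr: assumes "n \<ge> 1" shows "\<not> contractible (Sph n)"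
proof -
  have "nsphere (n-1) = top_of_set (Sph n)"
  proof -
    have "{..n-1} = {..<n}" using assms by auto
    moreover have "(\<forall>i>n-1. x i = 0) \<longleftrightarrow> (\<forall>i\<ge>n. x i = 0)" for x :: "nat \<Rightarrow> real"
      proof - have "\<And>i. (i > n-1) = (i \<ge> n)" using assms by auto then show ?thesis by simp qed
    ultimately show ?thesis unfolding nsphere Sph_def euclidean_product_topology by simp
  qed
  then show ?thesis using non_contractible_space_nsphere[of "n-1"] by simp
qed

lemma hom_canonI:
  fixes h :: "real \<times> 'a::topological_space \<Rightarrow> 'b::topological_space"
  assumes "continuous_on ({0..1}\<times>S) h" "h ` ({0..1}\<times>S) \<subseteq> T"
    "\<forall>x\<in>S. h(0,x) = p x" "\<forall>x\<in>S. h(1,x) = q x"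
  shows "homotopic_with_canon (\<lambda>x. True) S T p q"
  apply (subst homotopic_with)
   apply simp
  apply (rule exI[of _ h])
  using assms by (auto simp add: subtopology_Times[symmetric] continuous_map_subtopology_eu Pi_iff image_subset_iff)

definition nrm :: "nat \<Rightarrow> (nat \<Rightarrow> real) \<Rightarrow> (nat \<Rightarrow> real)" where
  "nrm n v = (\<lambda>i. if i<n then v i / sqrt (\<Sum>j<n. (v j)\<^sup>2) else 0)"

lemma nrm_Sph: assumes "(\<Sum>j<n. (v j)\<^sup>2) \<noteq> 0" shows "nrm n v \<in> Sph n"
proof -
  let ?s = "(\<Sum>j<n. (v j)\<^sup>2)"
  have pos: "?s > 0" using assms by (metis less_eq_real_def sum_nonneg zero_le_power2)
  have "(\<Sum>i<n. (nrm n v i)\<^sup>2) = (\<Sum>i<n. (v i)\<^sup>2 / ?s)"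
    by (rule sum.cong) (auto simp: nrm_def power_divide real_sqrt_pow2[OF less_imp_le[OF pos]])
  also have "\<dots> = 1" using pos by (simp add: sum_divide_distrib[symmetric])
  finally show ?thesis unfolding Sph_def by (auto simp: nrm_def)
qed

lemma nrm_id: assumes "x \<in> Sph n" shows "nrm n x = x"
  using assms unfolding Sph_def nrm_def by (auto simp: fun_eq_iff)

lemma cont_coord [continuous_intros]: "continuous_on S (\<lambda>x::nat\<Rightarrow>real. x i)"
  by (rule continuous_on_subset[OF continuous_on_product_coordinates]) simp

lemma cont_nrm:
  assumes "continuous_on S g" "\<forall>z\<in>S. (\<Sum>j<n. (g z j)\<^sup>2) \<noteq> 0"
  shows "continuous_on S (\<lambda>z. nrm n (g z))"
  unfolding nrm_def
proof (rule continuous_on_coordinatewise_then_product)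
  fix i
  have gi: "continuous_on S (\<lambda>z. g z j)" for j
    by (rule continuous_on_product_then_coordinatewise[OF assms(1)])
  show "continuous_on S (\<lambda>z. if i < n then g z i / sqrt (\<Sum>j<n. (g z j)\<^sup>2) else 0)"
  proof (cases "i<n")
    case True
    then show ?thesis using assms(2) by (simp, intro continuous_intros gi) auto
  qed simp
qed

lemma Sph_fix:
  assumes n: "n \<ge> 1" and Fc: "continuous_on (Sph n) F" and FS: "F ` Sph n \<subseteq> Sph n"
    and Fpos: "\<forall>x\<in>Sph n. \<forall>i<n. F x i \<ge> 0"
  shows "\<exists>x\<in>Sph n. F x = x"
proof (rule ccontr)
  assume nf: "\<not> (\<exists>x\<in>Sph n. F x = x)"
  have Fc2: "continuous_on ({0..1} \<times> Sph n) (\<lambda>z. F (snd z))"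
    by (rule continuous_on_compose2[OF Fc continuous_on_snd]) auto
  have Fc2i: "continuous_on ({0..1} \<times> Sph n) (\<lambda>z. F (snd z) i)" for i
    by (rule continuous_on_product_then_coordinatewise[OF Fc2])
  have sndi: "continuous_on ({0..1} \<times> Sph n) (\<lambda>z. snd z i)" for i :: nat
    by (rule continuous_on_product_then_coordinatewise[OF continuous_on_snd[OF continuous_on_id]])
  define g1 where "g1 = (\<lambda>z::real \<times> (nat \<Rightarrow> real). (\<lambda>i. (1 - fst z) * snd z i - fst z * F (snd z) i))"
  define g2 where "g2 = (\<lambda>z::real \<times> (nat \<Rightarrow> real). (\<lambda>i. - (1 - fst z) * F (snd z) i - fst z))"
  have nz1: "(\<Sum>j<n. (g1 z j)\<^sup>2) \<noteq> 0" if z: "z \<in> {0..1} \<times> Sph n" for z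
  proof
    assume s0: "(\<Sum>j<n. (g1 z j)\<^sup>2) = 0"
    obtain t x where zz: "z = (t,x)" and t: "0 \<le> t" "t \<le> 1" and x: "x \<in> Sph n" using z by auto
    have eq: "(1-t) * x j = t * F x j" if "j<n" for j
      using s0 that unfolding g1_def zz by (simp add: sum_nonneg_eq_0_iff)
    have Fx: "F x \<in> Sph n" using FS x by auto
    have "(1-t)\<^sup>2 = (\<Sum>j<n. ((1-t) * x j)\<^sup>2)"
      using x by (simp add: Sph_def power_mult_distrib sum_distrib_left[symmetric])
    also have "\<dots> = (\<Sum>j<n. (t * F x j)\<^sup>2)" using eq by simp
    also have "\<dots> = t\<^sup>2"
      using Fx by (simp add: Sph_def power_mult_distrib sum_distrib_left[symmetric])
    finally have "(1-t)\<^sup>2 = t\<^sup>2" .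
    then have "t = 1/2" by (simp add: power2_eq_square algebra_simps)
    have "F x = x"
    proof
      fix j show "F x j = x j"
      proof (cases "j<n")
        case True then show ?thesis using eq[OF True] \<open>t = 1/2\<close> by simp
      next
        case False then show ?thesis using x Fx by (simp add: Sph_def)
      qed
    qed
    then show False using nf x by auto
  qed
  have nz2: "(\<Sum>j<n. (g2 z j)\<^sup>2) \<noteq> 0" if z: "z \<in> {0..1} \<times> Sph n" for z
  proof
    assume s0: "(\<Sum>j<n. (g2 z j)\<^sup>2) = 0"
    obtain t x where zz: "z = (t,x)" and t: "0 \<le> t" "t \<le> 1" and x: "x \<in> Sph n" using z by auto
    have eq: "- (1-t) * F x j - t = 0" if "j<n" for j
      using s0 that unfolding g2_def zz by (simp add: sum_nonneg_eq_0_iff)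
    have Fx: "F x \<in> Sph n" using FS x by auto
    show False
    proof (cases "t = 0")
      case True
      then have "(\<Sum>j<n. (F x j)\<^sup>2) = 0" using eq by simp
      then show False using Fx by (simp add: Sph_def)
    next
      case False
      have "F x 0 \<ge> 0" using Fpos x n by auto
      moreover have "(1-t) \<ge> 0" using t by simp
      ultimately have "(1-t) * F x 0 \<ge> 0" by simp
      then show False using eq[of 0] n False t by (simp add: algebra_simps)
    qed
  qed
  have h1: "homotopic_with_canon (\<lambda>x. True) (Sph n) (Sph n) id (\<lambda>x. nrm n (\<lambda>i. - F x i))"
  proof (rule hom_canonI[where h="\<lambda>z. nrm n (g1 z)"])
    show "continuous_on ({0..1} \<times> Sph n) (\<lambda>z. nrm n (g1 z))"
    proof (rule cont_nrm)
      show "continuous_on ({0..1} \<times> Sph n) g1" unfolding g1_def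
        by (rule continuous_on_coordinatewise_then_product) (intro continuous_intros Fc2i sndi)
      show "\<forall>z\<in>{0..1} \<times> Sph n. (\<Sum>j<n. (g1 z j)\<^sup>2) \<noteq> 0" using nz1 by blast
    qed
    show "(\<lambda>z. nrm n (g1 z)) ` ({0..1} \<times> Sph n) \<subseteq> Sph n" using nz1 nrm_Sph by blast
    show "\<forall>x\<in>Sph n. nrm n (g1 (0, x)) = id x" by (simp add: g1_def nrm_id)
    show "\<forall>x\<in>Sph n. nrm n (g1 (1, x)) = nrm n (\<lambda>i. - F x i)" by (simp add: g1_def)
  qed
  have h2: "homotopic_with_canon (\<lambda>x. True) (Sph n) (Sph n) (\<lambda>x. nrm n (\<lambda>i. - F x i)) (\<lambda>x. nrm n (\<lambda>i. -1))"
  proof (rule hom_canonI[where h="\<lambda>z. nrm n (g2 z)"])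
    show "continuous_on ({0..1} \<times> Sph n) (\<lambda>z. nrm n (g2 z))"
    proof (rule cont_nrm)
      show "continuous_on ({0..1} \<times> Sph n) g2" unfolding g2_def
        by (rule continuous_on_coordinatewise_then_product) (intro continuous_intros Fc2i sndi)
      show "\<forall>z\<in>{0..1} \<times> Sph n. (\<Sum>j<n. (g2 z j)\<^sup>2) \<noteq> 0" using nz2 by blast
    qed
    show "(\<lambda>z. nrm n (g2 z)) ` ({0..1} \<times> Sph n) \<subseteq> Sph n" using nz2 nrm_Sph by blast
    show "\<forall>x\<in>Sph n. nrm n (g2 (0, x)) = nrm n (\<lambda>i. - F x i)" by (simp add: g2_def)
    show "\<forall>x\<in>Sph n. nrm n (g2 (1, x)) = nrm n (\<lambda>i. -1)" by (simp add: g2_def)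
  qed
  have "contractible (Sph n)" unfolding contractible_def
    using homotopic_with_trans[OF h1 h2] by blast
  then show False using Sph_noncontr n by blast
qed



definition Pr :: "nat \<Rightarrow> nat \<Rightarrow> tensor \<Rightarrow> (nat \<Rightarrow> real) \<Rightarrow> nat \<Rightarrow> real" where
  "Pr m n A x i = (\<Sum>is\<in>idx (m-1) n. A (i#is) * (\<Prod>t<m-1. x (is!t)))"

lemma finite_idx: "finite (idx k n)"
proof -
  have "idx k n = {xs. set xs \<subseteq> {..<n} \<and> length xs = k}" unfolding idx_def by auto
  then show ?thesis using finite_lists_length_eq[of "{..<n}" k] by simp
qed

lemma idx_nth: "is \<in> idx k n \<Longrightarrow> t < k \<Longrightarrow> is!t < n"
  unfolding idx_def by auto

lemma idx_Cons: "m \<ge> 1 \<Longrightarrow> i < n \<Longrightarrow> is \<in> idx (m-1) n \<Longrightarrow> i#is \<in> idx m n"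
  unfolding idx_def by auto

lemma nonneg_entry: "nonneg_tensor m n A \<Longrightarrow> m \<ge> 1 \<Longrightarrow> i < n \<Longrightarrow> is \<in> idx (m-1) n \<Longrightarrow> A (i#is) \<ge> 0"
  unfolding nonneg_tensor_def using idx_Cons by blast

lemma Pr_cont: "continuous_on S g \<Longrightarrow> continuous_on S (\<lambda>z. Pr m n A (g z) i)"
  unfolding Pr_def
  by (intro continuous_on_sum continuous_on_mult continuous_on_const continuous_on_prod
      continuous_on_product_then_coordinatewise[of S g])

lemma Pr_cong: "(\<forall>j<n. x j = x' j) \<Longrightarrow> Pr m n A x i = Pr m n A x' i"
  unfolding Pr_def
  by (intro sum.cong refl arg_cong2[where f="(*)"] prod.cong) (auto simp: idx_nth)

lemma Pr_nonneg:
  assumes "nonneg_tensor m n A" "m \<ge> 1" "i < n" "\<forall>j<n. x j \<ge> 0"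
  shows "Pr m n A x i \<ge> 0"
  unfolding Pr_def using assms
  by (intro sum_nonneg mult_nonneg_nonneg prod_nonneg) (auto simp: nonneg_entry idx_nth)

lemma Pr_mono:
  assumes "nonneg_tensor m n A" "m \<ge> 1" "i < n" "\<forall>j<n. 0 \<le> x j \<and> x j \<le> x' j"
  shows "Pr m n A x i \<le> Pr m n A x' i"
  unfolding Pr_def using assms
  by (intro sum_mono mult_left_mono prod_mono) (auto simp: nonneg_entry idx_nth)

lemma Pr_smult: "Pr m n A (\<lambda>j. c * x j) i = c^(m-1) * Pr m n A x i"
  unfolding Pr_def by (simp add: prod.distrib sum_distrib_left algebra_simps)

lemma Pr_strict:
  assumes "nonneg_tensor m n A" "m \<ge> 1" "i < n" "\<forall>j<n. 0 < x j \<and> x j \<le> x' j"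
    and is0: "is0 \<in> idx (m-1) n" "A (i#is0) \<noteq> 0" "b \<in> set is0" "x b < x' b"
  shows "Pr m n A x i < Pr m n A x' i"
  unfolding Pr_def
proof (rule sum_strict_mono_ex1)
  show "finite (idx (m-1) n)" by (rule finite_idx)
  show "\<forall>is\<in>idx (m - 1) n. A (i # is) * (\<Prod>t<m - 1. x (is ! t)) \<le> A (i # is) * (\<Prod>t<m - 1. x' (is ! t))"
    using assms by (intro ballI mult_left_mono prod_mono) (auto simp: nonneg_entry idx_nth less_imp_le)
  obtain t where t: "t < m-1" "is0!t = b" using is0(1,3) unfolding idx_def by (auto simp: in_set_conv_nth)
  have "(\<Prod>t<m - 1. x (is0 ! t)) < (\<Prod>t<m - 1. x' (is0 ! t))"
  proof (rule prod_mono_strict[of t])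
    show "\<And>ia. ia \<in> {..<m - 1} \<Longrightarrow> 0 \<le> x (is0 ! ia) \<and> x (is0 ! ia) \<le> x' (is0 ! ia)"
      using assms idx_nth[OF is0(1)] by (meson lessThan_iff less_imp_le)
    show "\<And>ia. ia \<in> {..<m - 1} \<Longrightarrow> 0 < x' (is0 ! ia)"
      using assms idx_nth[OF is0(1)] by (meson lessThan_iff less_le_trans)
  qed (use t is0 in auto)
  moreover have "A (i#is0) > 0" using nonneg_entry[OF assms(1,2,3) is0(1)] is0(2) by simp
  ultimately show "\<exists>is\<in>idx (m - 1) n. A (i # is) * (\<Prod>t<m - 1. x (is ! t)) < A (i # is) * (\<Prod>t<m - 1. x' (is ! t))"
    using is0(1) by (meson mult_strict_left_mono)
qed



lemma compact_Sph: "compact (Sph n)"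
proof -
  define B where "B = Pi\<^sub>E UNIV (\<lambda>i. if i<n then {-1..1} else {0::real})"
  have "compactin (product_topology (\<lambda>i. euclideanreal) UNIV) B"
    unfolding B_def compactin_PiE by auto
  then have cB: "compact B" by (simp add: euclidean_product_topology)
  have cl: "closed (Sph n)"
  proof -
    have "Sph n = {x. (\<Sum>i<n. (x i)\<^sup>2) = 1} \<inter> (\<Inter>i\<in>{n..}. {x. x i = 0})"
      unfolding Sph_def by auto
    moreover have "closed {x::nat\<Rightarrow>real. (\<Sum>i<n. (x i)\<^sup>2) = 1}"
      by (rule closed_Collect_eq) (intro continuous_intros)+
    moreover have "closed {x::nat\<Rightarrow>real. x i = 0}" for i
      by (rule closed_Collect_eq) (intro continuous_intros)+
    ultimately show ?thesis by (metis closed_Int closed_INT)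
  qed
  have "Sph n \<subseteq> B"
  proof
    fix x assume x: "x \<in> Sph n"
    have "\<bar>x i\<bar> \<le> 1" if "i<n" for i
    proof -
      have "(x i)\<^sup>2 \<le> (\<Sum>i<n. (x i)\<^sup>2)"
        using that by (intro member_le_sum) auto
      then show ?thesis using x abs_square_le_1 unfolding Sph_def by (metis (mono_tags, lifting) mem_Collect_eq)
    qed
    then show "x \<in> B" using x unfolding B_def Sph_def by (auto simp: PiE_UNIV_domain abs_le_iff)
  qed
  then have "Sph n = B \<inter> Sph n" by auto
  then show ?thesis using compact_Int_closed[OF cB cl] by simp
qed

definition Kp where "Kp n = Sph n \<inter> {x. \<forall>i. x i \<ge> 0}"

lemma compact_Kp: "compact (Kp n)"
proof -
  have "closed {x::nat\<Rightarrow>real. \<forall>i. x i \<ge> 0}"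
  proof -
    have "{x::nat\<Rightarrow>real. \<forall>i. x i \<ge> 0} = (\<Inter>i. {x. 0 \<le> x i})" by auto
    moreover have "closed {x::nat\<Rightarrow>real. 0 \<le> x i}" for i
      by (rule closed_Collect_le) (intro continuous_intros)+
    ultimately show ?thesis by auto
  qed
  then show ?thesis unfolding Kp_def using compact_Sph by auto
qed

lemma Sph_le1: "x \<in> Sph n \<Longrightarrow> \<bar>x i\<bar> \<le> 1"
proof -
  assume x: "x \<in> Sph n"
  show ?thesis
  proof (cases "i<n")
    case True
    have "(x i)\<^sup>2 \<le> (\<Sum>i<n. (x i)\<^sup>2)"
      using True by (intro member_le_sum) auto
    then show ?thesis using x abs_square_le_1 unfolding Sph_def by (metis (mono_tags, lifting) mem_Collect_eq)
  qed (use x in \<open>simp add: Sph_def\<close>)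
qed

lemma Sph_nz: "x \<in> Sph n \<Longrightarrow> \<exists>i<n. x i \<noteq> 0"
proof (rule ccontr)
  assume "x \<in> Sph n" "\<not> (\<exists>i<n. x i \<noteq> 0)"
  then have "(\<Sum>i<n. (x i)\<^sup>2) = 0" "(\<Sum>i<n. (x i)\<^sup>2) = 1" by (auto simp: Sph_def)
  then show False by simp
qed

lemma approx_eig:
  assumes m: "m \<ge> 2" and n: "n \<ge> 1" and A: "nonneg_tensor m n A"
    and w: "\<forall>i<n. w i > 0" "\<forall>i<n. Pr m n A w i \<ge> \<gamma> * w i^(m-1)"
    and e: "\<epsilon> > 0"
  shows "\<exists>x\<in>Kp n. \<exists>\<mu>\<ge>\<gamma>. \<forall>i<n. Pr m n A x i + \<epsilon> = \<mu> * x i^(m-1)"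
proof -
  define ab where "ab = (\<lambda>x::nat\<Rightarrow>real. \<lambda>i. \<bar>x i\<bar>)"
  define R where "R = (\<lambda>x. \<lambda>i. root (m-1) (Pr m n A (ab x) i + \<epsilon>))"
  define F where "F = (\<lambda>x. nrm n (R x))"
  have m1: "m - 1 > 0" "m \<ge> 1" using m by auto
  have Rpos: "R x i > 0" if "i<n" for x i
  proof -
    have "Pr m n A (ab x) i \<ge> 0" using Pr_nonneg[OF A m1(2) that] by (simp add: ab_def)
    then show ?thesis unfolding R_def using e m1 by (intro real_root_gt_zero) auto
  qed
  have Rsum: "(\<Sum>j<n. (R x j)\<^sup>2) > 0" for x
  proof -
    have "(R x 0)\<^sup>2 > 0" using Rpos[of 0 x] n by simp
    moreover have "(R x 0)\<^sup>2 \<le> (\<Sum>j<n. (R x j)\<^sup>2)" using n by (intro member_le_sum) auto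
    ultimately show ?thesis by linarith
  qed
  have FS: "F x \<in> Sph n" for x unfolding F_def using Rsum[of x] by (intro nrm_Sph) auto
  have Fpos: "F x i > 0" if "i<n" for x i
    using Rpos[OF that] Rsum[of x] that unfolding F_def nrm_def by simp
  have Fc: "continuous_on (Sph n) F"
    unfolding F_def
  proof (rule cont_nrm)
    have abc: "continuous_on (Sph n) ab" unfolding ab_def
      by (rule continuous_on_coordinatewise_then_product) (intro continuous_intros)
    show "continuous_on (Sph n) R" unfolding R_def
      by (rule continuous_on_coordinatewise_then_product)
         (intro continuous_intros Pr_cont[OF abc])
    show "\<forall>z\<in>Sph n. (\<Sum>j<n. (R z j)\<^sup>2) \<noteq> 0" using Rsum by (metis less_irrefl)
  qed
  obtain x where x: "x \<in> Sph n" "F x = x"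
    using Sph_fix[OF n Fc] FS Fpos by (meson image_subsetI less_imp_le)
  have xpos: "x i > 0" if "i<n" for i using Fpos[OF that, of x] x(2) by simp
  have abx: "ab x = x"
  proof
    fix i show "ab x i = x i"
      using xpos[of i] x(1) unfolding ab_def Sph_def by (cases "i<n") auto
  qed
  define N where "N = sqrt (\<Sum>j<n. (R x j)\<^sup>2)"
  have Npos: "N > 0" unfolding N_def using Rsum by simp
  define \<mu> where "\<mu> = N^(m-1)"
  have eig: "Pr m n A x i + \<epsilon> = \<mu> * x i^(m-1)" if "i<n" for i
  proof -
    have "x i = F x i" using x(2) by simp
    also have "\<dots> = R x i / N" using that by (simp add: F_def nrm_def N_def)
    finally have "x i = R x i / N" .
    then have "\<mu> * x i^(m-1) = (R x i)^(m-1)" unfolding \<mu>_def using Npos by (simp add: power_divide)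
    also have "\<dots> = Pr m n A x i + \<epsilon>"
      unfolding R_def abx using m1 Pr_nonneg[OF A m1(2) that, of x] xpos e
      by (subst real_root_pow_pos2) (auto simp: less_imp_le)
    finally show ?thesis by simp
  qed
  \<comment> \<open>Collatz-Wielandt\<close>
  define t where "t = Min ((\<lambda>i. x i / w i) ` {..<n})"
  have fin: "finite ((\<lambda>i. x i / w i) ` {..<n})" "(\<lambda>i. x i / w i) ` {..<n} \<noteq> {}" using n by (auto simp: lessThan_empty_iff)
  obtain k where k: "k < n" "t = x k / w k" using Min_in[OF fin] unfolding t_def by auto
  have tle: "t \<le> x i / w i" if "i<n" for i unfolding t_def using fin that by auto
  have tpos: "t > 0" using k xpos w by simp
  have "Pr m n A (\<lambda>j. t * w j) k \<le> Pr m n A x k"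
  proof (rule Pr_mono[OF A m1(2) k(1)], intro allI impI conjI)
    fix j assume j: "j<n"
    show "0 \<le> t * w j" using tpos w j by (simp add: less_imp_le)
    show "t * w j \<le> x j" using tle[OF j] w j by (simp add: pos_le_divide_eq)
  qed
  then have "t^(m-1) * Pr m n A w k \<le> Pr m n A x k" by (simp add: Pr_smult)
  moreover have "t^(m-1) * (\<gamma> * w k^(m-1)) \<le> t^(m-1) * Pr m n A w k"
    using w k tpos by (intro mult_left_mono) auto
  moreover have "t * w k = x k" using k w[rule_format, OF k(1)] by simp
  moreover have "\<gamma> * (t * w k)^(m-1) = t^(m-1) * (\<gamma> * w k^(m-1))"
    by (simp add: power_mult_distrib)
  ultimately have "\<gamma> * x k^(m-1) \<le> Pr m n A x k" by (metis order_trans)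
  then have "\<gamma> * x k^(m-1) < \<mu> * x k^(m-1)" using eig[OF k(1)] e by linarith
  then have "\<gamma> < \<mu>" using xpos[OF k(1)] by (simp add: mult_less_cancel_right)
  moreover have "x \<in> Kp n"
  proof -
    have "x i \<ge> 0" for i
    proof (cases "i<n")
      case True then show ?thesis using xpos less_imp_le by blast
    next
      case False then show ?thesis using x(1) by (simp add: Sph_def)
    qed
    then show ?thesis unfolding Kp_def using x(1) by auto
  qed
  ultimately show ?thesis using eig by (meson less_imp_le)
qed



lemma Pr_cont': "continuous_on S (\<lambda>z. Pr m n A z i)"
  using Pr_cont[of S "\<lambda>z. z"] continuous_on_id by simp

lemma exist_eig:
  assumes m: "m \<ge> 2" and n: "n \<ge> 1" and A: "nonneg_tensor m n A"
    and w: "\<forall>i<n. w i > 0" "\<forall>i<n. Pr m n A w i \<ge> \<gamma> * w i^(m-1)"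
  shows "\<exists>x \<mu>. (\<forall>i<n. x i \<ge> 0) \<and> (\<exists>i<n. x i \<noteq> 0) \<and> \<mu> \<ge> \<gamma> \<and> (\<forall>i<n. Pr m n A x i = \<mu> * x i^(m-1))"
proof -
  define T1 where "T1 = (\<lambda>x. (\<Sum>i<n. \<Sum>j<n. \<bar>Pr m n A x i * x j^(m-1) - Pr m n A x j * x i^(m-1)\<bar>))"
  define T2 where "T2 = (\<lambda>x. (\<Sum>i<n. max 0 (\<gamma> * x i^(m-1) - Pr m n A x i)))"
  define \<Phi> where "\<Phi> = (\<lambda>x. T1 x + T2 x)"
  define C where "C = real (n*n + n)"
  have Cpos: "C > 0" unfolding C_def using n by (simp add: add_pos_nonneg)
  have T1nn: "T1 x \<ge> 0" for x unfolding T1_def by (intro sum_nonneg) auto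
  have T2nn: "T2 x \<ge> 0" for x unfolding T2_def by (intro sum_nonneg) auto
  have bound: "\<Phi> x \<le> C * \<epsilon>" if x: "x \<in> Kp n" and mu: "\<mu> \<ge> \<gamma>" and e: "\<epsilon> > 0"
      and eq: "\<forall>i<n. Pr m n A x i + \<epsilon> = \<mu> * x i^(m-1)" for x \<mu> \<epsilon>
  proof -
    have a01: "0 \<le> x i^(m-1) \<and> x i^(m-1) \<le> 1" for i
    proof -
      have "0 \<le> x i" "x i \<le> 1" using x Sph_le1[of x n i] unfolding Kp_def by auto
      then show ?thesis by (simp add: power_le_one)
    qed
    have "T1 x \<le> real (card {..<n}) * (real (card {..<n}) * \<epsilon>)"
      unfolding T1_def
    proof (rule sum_bounded_above)
      fix i assume i: "i \<in> {..<n}"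
      show "(\<Sum>j<n. \<bar>Pr m n A x i * x j ^ (m - 1) - Pr m n A x j * x i ^ (m - 1)\<bar>) \<le> real (card {..<n}) * \<epsilon>"
      proof (rule sum_bounded_above)
        fix j assume j: "j \<in> {..<n}"
        have "Pr m n A x i * x j ^ (m - 1) - Pr m n A x j * x i ^ (m - 1)
            = (\<mu> * x i^(m-1) - \<epsilon>) * x j ^ (m - 1) - (\<mu> * x j^(m-1) - \<epsilon>) * x i ^ (m - 1)"
          using eq i j by (metis add_diff_cancel_right' lessThan_iff)
        also have "\<dots> = \<epsilon> * (x i^(m-1) - x j^(m-1))" by (simp add: algebra_simps)
        finally have "\<bar>Pr m n A x i * x j ^ (m - 1) - Pr m n A x j * x i ^ (m - 1)\<bar> = \<epsilon> * \<bar>x i^(m-1) - x j^(m-1)\<bar>"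
          using e by (simp add: abs_mult)
        also have "\<dots> \<le> \<epsilon> * 1" using a01[of i] a01[of j] e by (intro mult_left_mono) auto
        finally show "\<bar>Pr m n A x i * x j ^ (m - 1) - Pr m n A x j * x i ^ (m - 1)\<bar> \<le> \<epsilon>" by simp
      qed
    qed
    moreover have "T2 x \<le> real (card {..<n}) * \<epsilon>"
      unfolding T2_def
    proof (rule sum_bounded_above)
      fix i assume i: "i \<in> {..<n}"
      have "\<gamma> * x i^(m-1) - Pr m n A x i = (\<gamma> - \<mu>) * x i^(m-1) + \<epsilon>"
        using eq i by (simp add: algebra_simps)
      moreover have "(\<gamma> - \<mu>) * x i^(m-1) \<le> 0" using mu a01[of i] by (simp add: mult_nonpos_nonneg)
      ultimately show "max 0 (\<gamma> * x i^(m-1) - Pr m n A x i) \<le> \<epsilon>" using e by simp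
    qed
    ultimately show ?thesis unfolding \<Phi>_def C_def by (simp add: algebra_simps)
  qed
  obtain x0 \<mu>0 where x0: "x0 \<in> Kp n" "\<mu>0 \<ge> \<gamma>" "\<forall>i<n. Pr m n A x0 i + 1 = \<mu>0 * x0 i^(m-1)"
    using approx_eig[OF m n A w, of 1] by auto
  have cont: "continuous_on (Kp n) \<Phi>"
    unfolding \<Phi>_def T1_def T2_def by (intro continuous_intros Pr_cont')
  obtain x where x: "x \<in> Kp n" and xmin: "\<forall>y\<in>Kp n. \<Phi> x \<le> \<Phi> y"
    using continuous_attains_inf[OF compact_Kp _ cont] x0(1) by blast
  have small: "\<Phi> x \<le> C * \<epsilon>" if e: "\<epsilon> > 0" for \<epsilon>
  proof -
    obtain y \<mu> where y: "y \<in> Kp n" "\<mu> \<ge> \<gamma>" "\<forall>i<n. Pr m n A y i + \<epsilon> = \<mu> * y i^(m-1)"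
      using approx_eig[OF m n A w e] by auto
    then show ?thesis using bound[OF y(1,2) e y(3)] xmin by force
  qed
  have P0: "\<Phi> x = 0"
  proof (rule ccontr)
    assume "\<Phi> x \<noteq> 0"
    then have pos: "\<Phi> x > 0" using T1nn T2nn unfolding \<Phi>_def by (metis add_nonneg_nonneg order_le_less)
    have "\<Phi> x \<le> C * (\<Phi> x / (2*C))" using small[of "\<Phi> x / (2*C)"] pos Cpos by simp
    also have "\<dots> = \<Phi> x / 2" using Cpos by simp
    finally show False using pos by simp
  qed
  then have T10: "T1 x = 0" and T20: "T2 x = 0" using T1nn T2nn unfolding \<Phi>_def by (metis add_nonneg_eq_0_iff)+
  have cross: "Pr m n A x i * x j^(m-1) = Pr m n A x j * x i^(m-1)" if "i<n" "j<n" for i j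
  proof -
    have "(\<Sum>j<n. \<bar>Pr m n A x i * x j^(m-1) - Pr m n A x j * x i^(m-1)\<bar>) = 0"
      using T10 that unfolding T1_def by (subst (asm) sum_nonneg_eq_0_iff) (auto intro: sum_nonneg)
    then show ?thesis using that by (subst (asm) sum_nonneg_eq_0_iff) auto
  qed
  have lower: "\<gamma> * x i^(m-1) \<le> Pr m n A x i" if "i<n" for i
  proof -
    have "max 0 (\<gamma> * x i^(m-1) - Pr m n A x i) = 0"
      using T20 that unfolding T2_def by (subst (asm) sum_nonneg_eq_0_iff) auto
    then show ?thesis by simp
  qed
  obtain k where k: "k < n" "x k \<noteq> 0" using Sph_nz x unfolding Kp_def by blast
  have xnn: "x i \<ge> 0" for i using x unfolding Kp_def by auto
  then have xk: "x k > 0" using k by (metis order_le_less)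
  have ak: "x k^(m-1) > 0" using xk by simp
  define \<mu> where "\<mu> = Pr m n A x k / x k^(m-1)"
  have "\<mu> \<ge> \<gamma>" unfolding \<mu>_def using lower[OF k(1)] ak by (simp add: pos_le_divide_eq)
  moreover have "Pr m n A x i = \<mu> * x i^(m-1)" if "i<n" for i
    using cross[OF that k(1)] ak xk unfolding \<mu>_def by (simp add: eq_divide_eq)
  ultimately show ?thesis using xnn k by blast
qed



lemma arc_cross:
  assumes "(u,v) \<in> R\<^sup>*" "u \<notin> S" "v \<in> S"
  shows "\<exists>a b. (a,b) \<in> R \<and> a \<notin> S \<and> b \<in> S"
  using assms
proof (induction rule: rtrancl_induct)
  case base then show ?case by simp
next
  case (step y z)
  show ?case
  proof (cases "y \<in> S")
    case True then show ?thesis using step by blast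
  next
    case False then show ?thesis using step by blast
  qed
qed

lemma eta_exists:
  fixes c P \<gamma> :: real
  assumes "\<gamma> * c^k < P"
  shows "\<exists>\<eta>>0. \<gamma> * (c + \<eta>)^k < P"
proof -
  have "((\<lambda>\<eta>. \<gamma> * (c + \<eta>)^k) \<longlongrightarrow> \<gamma> * (c + 0)^k) (at_right 0)"
    by (intro tendsto_intros)
  then have "eventually (\<lambda>\<eta>. \<gamma> * (c + \<eta>)^k < P) (at_right 0)"
    using assms by (intro order_tendstoD(2)) auto
  then obtain b where b: "b > 0" "\<forall>y>0. y < b \<longrightarrow> \<gamma> * (c + y)^k < P"
    unfolding eventually_at_right_field by auto
  show ?thesis using b by (intro exI[of _ "b/2"]) auto
qed

lemma s3_step:
  assumes m: "m \<ge> 2" and A: "nonneg_tensor m n A"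
    and wpos: "\<forall>i<n. w i > 0" and ge: "\<forall>i<n. Pr m n A w i \<ge> \<gamma> * w i^(m-1)"
    and st: "\<forall>i\<in>S. Pr m n A w i > \<gamma> * w i^(m-1)" and S: "S \<subseteq> {..<n}"
    and ab: "(a,b) \<in> arcs m n A" "a \<notin> S" "b \<in> S"
  shows "\<exists>w'. (\<forall>i<n. w' i > 0) \<and> (\<forall>i<n. Pr m n A w' i \<ge> \<gamma> * w' i^(m-1))
              \<and> (\<forall>i\<in>insert a S. Pr m n A w' i > \<gamma> * w' i^(m-1))"
proof -
  have m1: "m \<ge> 1" using m by simp
  obtain is0 where a: "a < n" and b: "b < n" and is0: "is0 \<in> idx (m-1) n" "A (a#is0) \<noteq> 0" "b \<in> set is0"
    using ab(1) unfolding arcs_def by auto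
  obtain \<eta> where eta: "\<eta> > 0" "\<gamma> * (w b + \<eta>)^(m-1) < Pr m n A w b"
    using eta_exists[of \<gamma> "w b" "m-1" "Pr m n A w b"] st ab(3) by auto
  define w' where "w' = w(b := w b + \<eta>)"
  have w'pos: "\<forall>i<n. w' i > 0" using wpos eta unfolding w'_def by auto
  have le: "\<forall>j<n. 0 \<le> w j \<and> w j \<le> w' j" using wpos eta unfolding w'_def by (auto simp: less_imp_le)
  have mono: "Pr m n A w i \<le> Pr m n A w' i" if "i<n" for i
    by (rule Pr_mono[OF A m1 that le])
  have ge': "Pr m n A w' i \<ge> \<gamma> * w' i^(m-1)" if i: "i<n" for i
  proof (cases "i = b")
    case True
    then show ?thesis using eta mono[OF i] unfolding w'_def by auto
  next
    case False
    then show ?thesis using ge i mono[OF i] unfolding w'_def by force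
  qed
  have st': "Pr m n A w' i > \<gamma> * w' i^(m-1)" if i: "i \<in> insert a S" for i
  proof (cases "i = a")
    case True
    have ne: "a \<noteq> b" using ab by auto
    have "Pr m n A w a < Pr m n A w' a"
      by (rule Pr_strict[OF A m1 a _ is0]) (use wpos le eta in \<open>auto simp: w'_def\<close>)
    then show ?thesis using ge a ne True unfolding w'_def by force
  next
    case False
    then have iS: "i \<in> S" "i < n" using i S by auto
    show ?thesis
    proof (cases "i = b")
      case True
      then show ?thesis using eta mono[OF iS(2)] unfolding w'_def by auto
    next
      case False
      then show ?thesis using st iS mono[OF iS(2)] unfolding w'_def by force
    qed
  qed
  show ?thesis using w'pos ge' st' by blast
qed

lemma s3:
  assumes m: "m \<ge> 2" and A: "nonneg_tensor m n A" and wi: "weakly_irreducible m n A"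
  shows "\<forall>S w. S \<subseteq> {..<n} \<and> S \<noteq> {} \<and> n - card S = k \<and> (\<forall>i<n. w i > 0) \<and>
          (\<forall>i<n. Pr m n A w i \<ge> \<gamma> * w i^(m-1)) \<and> (\<forall>i\<in>S. Pr m n A w i > \<gamma> * w i^(m-1))
        \<longrightarrow> (\<exists>w'. (\<forall>i<n. w' i > 0) \<and> (\<forall>i<n. Pr m n A w' i > \<gamma> * w' i^(m-1)))"
proof (induction k)
  case 0
  show ?case
  proof (intro allI impI)
    fix S w
    assume h: "S \<subseteq> {..<n} \<and> S \<noteq> {} \<and> n - card S = 0 \<and> (\<forall>i<n. w i > 0) \<and>
          (\<forall>i<n. Pr m n A w i \<ge> \<gamma> * w i^(m-1)) \<and> (\<forall>i\<in>S. Pr m n A w i > \<gamma> * w i^(m-1))"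
    then have "card {..<n} \<le> card S" by simp
    then have "S = {..<n}" using h card_seteq[of "{..<n}" S] by auto
    then show "\<exists>w'. (\<forall>i<n. w' i > 0) \<and> (\<forall>i<n. Pr m n A w' i > \<gamma> * w' i^(m-1))"
      using h by auto
  qed
next
  case (Suc k)
  show ?case
  proof (intro allI impI)
    fix S w
    assume h: "S \<subseteq> {..<n} \<and> S \<noteq> {} \<and> n - card S = Suc k \<and> (\<forall>i<n. w i > 0) \<and>
          (\<forall>i<n. Pr m n A w i \<ge> \<gamma> * w i^(m-1)) \<and> (\<forall>i\<in>S. Pr m n A w i > \<gamma> * w i^(m-1))"
    have "S \<noteq> {..<n}" using h by auto
    then obtain a0 where a0: "a0 < n" "a0 \<notin> S" using h by auto
    obtain b0 where b0: "b0 \<in> S" using h by auto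
    then have "b0 < n" using h by auto
    then have "(a0, b0) \<in> (arcs m n A)\<^sup>*" using wi a0 unfolding weakly_irreducible_def by auto
    then obtain a b where ab: "(a,b) \<in> arcs m n A" "a \<notin> S" "b \<in> S"
      using arc_cross a0 b0 by metis
    have an: "a < n" using ab unfolding arcs_def by auto
    obtain w' where w': "\<forall>i<n. w' i > 0" "\<forall>i<n. Pr m n A w' i \<ge> \<gamma> * w' i^(m-1)"
        "\<forall>i\<in>insert a S. Pr m n A w' i > \<gamma> * w' i^(m-1)"
      using s3_step[OF m A _ _ _ _ ab, of w \<gamma>] h by blast
    have fin: "finite S" using h finite_subset by blast
    have "card (insert a S) = Suc (card S)" using fin ab by simp
    moreover have "n - card S = Suc k" using h by blast
    ultimately have "n - card (insert a S) = k" by simp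
    moreover have "insert a S \<subseteq> {..<n}" using h an by auto
    ultimately show "\<exists>w'. (\<forall>i<n. w' i > 0) \<and> (\<forall>i<n. Pr m n A w' i > \<gamma> * w' i^(m-1))"
      using Suc.IH w' by blast
  qed
qed

lemma strict_all:
  assumes m: "m \<ge> 2" and A: "nonneg_tensor m n A" and wi: "weakly_irreducible m n A"
    and z: "\<forall>i<n. z i > 0" "\<forall>i<n. Pr m n A z i \<ge> \<gamma> * z i^(m-1)"
    and i0: "i0 < n" "Pr m n A z i0 > \<gamma> * z i0^(m-1)"
  shows "\<exists>w. (\<forall>i<n. w i > 0) \<and> (\<forall>i<n. Pr m n A w i > \<gamma> * w i^(m-1))"
  using s3[OF m A wi, of "n - card {i0}" \<gamma>] z i0 by blast



lemma phase_lemma: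
  fixes W :: "'a \<Rightarrow> complex"
  assumes fin: "finite I" and eq: "cmod (sum W I) = (\<Sum>k\<in>I. cmod (W k))"
    and nz: "sum W I \<noteq> 0" and k: "k \<in> I"
  shows "W k = of_real (cmod (W k)) * (sum W I / of_real (cmod (sum W I)))"
proof -
  define S where "S = sum W I"
  define c where "c = cmod S"
  have cpos: "c > 0" unfolding c_def S_def using nz by simp
  define u where "u = S / of_real c"
  have uu: "u * cnj u = 1"
  proof -
    have "u * cnj u = S * cnj S / of_real (c^2)" unfolding u_def by (simp add: power2_eq_square)
    also have "\<dots> = 1" unfolding c_def using complex_norm_square[of S] cpos c_def by simp
    finally show ?thesis .
  qed
  have cu: "cmod (cnj u) = 1" unfolding u_def c_def using cpos c_def by (simp add: norm_divide)
  define v where "v = (\<lambda>j. cnj u * W j)"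
  have sv: "sum v I = of_real c"
  proof -
    have "sum v I = cnj u * S" unfolding v_def S_def by (simp add: sum_distrib_left)
    also have "\<dots> = cnj S * S / of_real c" unfolding u_def by simp
    also have "\<dots> = of_real (c^2) / of_real c" unfolding c_def using complex_norm_square[of S] by (simp add: mult.commute)
    also have "\<dots> = of_real c" using cpos by (simp add: power2_eq_square)
    finally show ?thesis .
  qed
  have cv: "cmod (v j) = cmod (W j)" for j unfolding v_def using cu by (simp add: norm_mult)
  have "(\<Sum>j\<in>I. Re (v j)) = (\<Sum>j\<in>I. cmod (v j))"
  proof -
    have "(\<Sum>j\<in>I. Re (v j)) = Re (sum v I)" by simp
    also have "\<dots> = c" using sv by simp
    also have "\<dots> = (\<Sum>j\<in>I. cmod (v j))" using eq cv unfolding c_def S_def by simp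
    finally show ?thesis .
  qed
  then have "Re (v k) = cmod (v k)"
    by (rule sum_mono_inv) (use k fin complex_Re_le_cmod in auto)
  then have "Im (v k) = 0"
    using cmod_power2[of "v k"] by (simp add: power2_eq_square)
  then have vk: "v k = of_real (cmod (W k))" using \<open>Re (v k) = cmod (v k)\<close> cv
    by (simp add: complex_eq_iff)
  have "W k = u * cnj u * W k" using uu by simp
  also have "\<dots> = u * v k" unfolding v_def by simp
  also have "\<dots> = of_real (cmod (W k)) * u" using vk by simp
  finally show ?thesis unfolding u_def S_def c_def .
qed

lemma cis_eq_int:
  assumes "cis a = cis b"
  shows "\<exists>N::int. a = b + 2 * pi * of_int N"
proof -
  have "cis (a - b) = 1" using assms by (simp add: cis_divide[symmetric])
  then have "exp (\<i> * complex_of_real (a - b)) = 1" by (simp add: cis_conv_exp)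
  then obtain N :: int where "Im (\<i> * complex_of_real (a - b)) = of_int (2 * N) * pi"
    unfolding exp_eq_1 by blast
  then have "a - b = 2 * pi * of_int N" by simp
  then show ?thesis by (intro exI[of _ N]) simp
qed

lemma tmult_real: "tmult m n A (\<lambda>i. complex_of_real (x i)) i = complex_of_real (Pr m n A x i)"
  unfolding tmult_def Pr_def by simp

lemma eig_bound:
  assumes eig: "is_eigenpair m n A lam x"
  shows "cmod lam \<le> (\<Sum>i<n. \<Sum>is\<in>idx (m-1) n. \<bar>A (i#is)\<bar>)"
proof -
  obtain i0 where i0: "i0 < n" "x i0 \<noteq> 0" using eig unfolding is_eigenpair_def by auto
  define M where "M = Max ((\<lambda>i. cmod (x i)) ` {..<n})"
  have fin: "finite ((\<lambda>i. cmod (x i)) ` {..<n})" "(\<lambda>i. cmod (x i)) ` {..<n} \<noteq> {}" using i0 by auto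
  obtain i where i: "i < n" "cmod (x i) = M" using Max_in[OF fin] unfolding M_def by auto
  have leM: "cmod (x j) \<le> M" if "j<n" for j unfolding M_def using fin that by auto
  have Mpos: "M > 0" using leM[OF i0(1)] i0 by (meson norm_not_less_zero not_le order_le_less_trans zero_less_norm_iff)
  have "cmod lam * M^(m-1) = cmod (lam * x i^(m-1))" using i by (simp add: norm_mult norm_power)
  also have "\<dots> = cmod (tmult m n A x i)" using eig i unfolding is_eigenpair_def by simp
  also have "\<dots> \<le> (\<Sum>is\<in>idx (m-1) n. cmod (complex_of_real (A (i#is)) * (\<Prod>t<m-1. x (is!t))))"
    unfolding tmult_def by (rule norm_sum)
  also have "\<dots> \<le> (\<Sum>is\<in>idx (m-1) n. \<bar>A (i#is)\<bar> * M^(m-1))"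
  proof (rule sum_mono)
    fix js assume js: "js \<in> idx (m-1) n"
    have "cmod (\<Prod>t<m-1. x (js!t)) = (\<Prod>t<m-1. cmod (x (js!t)))" by (simp add: prod_norm)
    also have "\<dots> \<le> (\<Prod>t<m-1. M)" by (intro prod_mono) (use js leM idx_nth in auto)
    finally show "cmod (complex_of_real (A (i#js)) * (\<Prod>t<m-1. x (js!t))) \<le> \<bar>A (i#js)\<bar> * M^(m-1)"
      by (simp add: norm_mult mult_left_mono)
  qed
  also have "\<dots> = (\<Sum>is\<in>idx (m-1) n. \<bar>A (i#is)\<bar>) * M^(m-1)" by (simp add: sum_distrib_right)
  finally have "cmod lam \<le> (\<Sum>is\<in>idx (m-1) n. \<bar>A (i#is)\<bar>)" using Mpos by simp
  also have "\<dots> \<le> (\<Sum>i<n. \<Sum>is\<in>idx (m-1) n. \<bar>A (i#is)\<bar>)"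
    using i by (intro member_le_sum) (auto intro: sum_nonneg)
  finally show ?thesis .
qed

lemma eig_le_rho:
  assumes "is_eigenpair m n A lam x"
  shows "cmod lam \<le> spectral_radius m n A"
  unfolding spectral_radius_def
proof (rule cSup_upper)
  show "cmod lam \<in> cmod ` tensor_eigenvalues m n A"
    using assms unfolding tensor_eigenvalues_def by auto
  show "bdd_above (cmod ` tensor_eigenvalues m n A)"
  proof (rule bdd_aboveI[where M="\<Sum>i<n. \<Sum>is\<in>idx (m-1) n. \<bar>A (i#is)\<bar>"])
    fix r assume "r \<in> cmod ` tensor_eigenvalues m n A"
    then obtain lam' x' where "r = cmod lam'" "is_eigenpair m n A lam' x'"
      unfolding tensor_eigenvalues_def by auto
    then show "r \<le> (\<Sum>i<n. \<Sum>is\<in>idx (m-1) n. \<bar>A (i#is)\<bar>)" using eig_bound by blast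
  qed
qed

lemma sum_incid:
  assumes "e \<in> idx m n"
  shows "(\<Sum>i<n. incid m e i * \<phi> i) = (\<Sum>k<m. \<phi> (e!k))"
proof -
  have "(\<Sum>k<m. \<phi> (e!k)) = (\<Sum>v<n. \<Sum>k\<in>{k. k \<in> {..<m} \<and> e!k = v}. \<phi> (e!k))"
    by (rule sum.group[symmetric]) (use assms idx_nth in auto)
  also have "\<dots> = (\<Sum>v<n. incid m e v * \<phi> v)"
  proof (rule sum.cong[OF refl])
    fix v
    have "(\<Sum>k\<in>{k. k \<in> {..<m} \<and> e!k = v}. \<phi> (e!k)) = (\<Sum>k\<in>{k. k < m \<and> e!k = v}. \<phi> v)"
      by (rule sum.cong) auto
    then show "(\<Sum>k\<in>{k. k \<in> {..<m} \<and> e!k = v}. \<phi> (e!k)) = incid m e v * \<phi> v"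
      unfolding incid_def by simp
  qed
  finally show ?thesis by simp
qed



lemma final_arith:
  fixes S j l m :: nat and N :: int
  assumes m: "m > 0" and l: "l > 0"
    and eq: "real S * real l = real j * real m + of_int N * real m * real l"
  shows "S mod m = (m * j div l) mod m"
proof -
  have "real_of_int (int S * int l) = real_of_int (int j * int m + N * int m * int l)"
    using eq by simp
  then have ie: "int S * int l = int j * int m + N * int m * int l" by (simp only: of_int_eq_iff)
  then have "int (m*j) = int l * (int S - N * int m)" by (simp add: algebra_simps)
  then have "int (m*j) div int l = int S - N * int m" using l by simp
  then have d: "int (m*j div l) = int S - N * int m" by (simp add: zdiv_int)
  have "int ((m*j div l) mod m) = int (m*j div l) mod int m" by (simp add: zmod_int)
  also have "\<dots> = (int S - N * int m) mod int m" using d by simp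
  also have "\<dots> = int S mod int m" by (simp add: mod_diff_eq[symmetric] )
  also have "\<dots> = int (S mod m)" by (simp add: zmod_int)
  finally show ?thesis by simp
qed

lemma prod_cis: "finite K \<Longrightarrow> (\<Prod>k\<in>K. cis (f k)) = cis (\<Sum>k\<in>K. f k)"
  by (induction K rule: finite_induct) (auto simp: cis_mult)



theorem lemma3p2:
  fixes m n l j :: nat and A :: tensor and y :: "nat \<Rightarrow> complex" and \<phi> :: "nat \<Rightarrow> nat"
  assumes "m \<ge> 2" and "n \<ge> 1" and "l \<ge> 1"
    and "nonneg_tensor m n A" and "comb_symmetric m n A" and "weakly_irreducible m n A"
    and "spectral_sym m n A l"
    and "j < l"
    and "is_eigenpair m n A (complex_of_real (spectral_radius m n A) * cis (2 * pi * real j / real l)) y"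
    and "y 0 = 1"
    and "\<forall>i<n. \<phi> i < m \<and> y i / complex_of_real (cmod (y i)) = cis (2 * pi / real m * real (\<phi> i))"
  shows "\<forall>e\<in>edges m n A. (\<Sum>i<n. incid m e i * \<phi> i) mod m = (m * j div l) mod m"
proof -
  have m: "m \<ge> 2" and n: "n \<ge> 1" and l: "l \<ge> 1" and A: "nonneg_tensor m n A"
    and wi: "weakly_irreducible m n A" using assms by auto
  have m1: "m \<ge> 1" using m by simp
  define rho where "rho = spectral_radius m n A"
  define a where "a = 2 * pi * real j / real l"
  define lam where "lam = complex_of_real rho * cis a"
  have eig: "is_eigenpair m n A lam y" using assms(9) unfolding lam_def rho_def a_def .
  have cl: "cmod lam = \<bar>rho\<bar>" unfolding lam_def by (simp add: norm_mult)
  have "cmod lam \<le> rho" using eig_le_rho[OF eig] unfolding rho_def .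
  then have rho0: "rho \<ge> 0" and clam: "cmod lam = rho" using cl by auto
  define \<theta> where "\<theta> = (\<lambda>k. 2 * pi / real m * real (\<phi> k))"
  have ynz: "y i \<noteq> 0" if "i<n" for i
  proof
    assume "y i = 0"
    then have "cis (\<theta> i) = 0" using assms(11) that unfolding \<theta>_def by auto
    then show False by (metis norm_cis zero_neq_one norm_zero)
  qed
  define z where "z = (\<lambda>i. cmod (y i))"
  have zpos: "\<forall>i<n. z i > 0" using ynz unfolding z_def by simp
  have ypol: "y i = complex_of_real (z i) * cis (\<theta> i)" if "i<n" for i
  proof -
    have "y i / complex_of_real (z i) = cis (\<theta> i)" using assms(11) that unfolding z_def \<theta>_def by auto
    moreover have "z i \<noteq> 0" using zpos that by (metis less_irrefl)
    ultimately show ?thesis by (simp add: divide_eq_eq mult.commute)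
  qed
  have cterm: "cmod (complex_of_real (A (i#js)) * (\<Prod>t<m-1. y (js!t))) = A (i#js) * (\<Prod>t<m-1. z (js!t))"
    if "i<n" "js \<in> idx (m-1) n" for i js
    using nonneg_entry[OF A m1 that] by (simp add: norm_mult prod_norm[symmetric] z_def)
  have tri: "rho * z i^(m-1) \<le> Pr m n A z i" if i: "i<n" for i
  proof -
    have "rho * z i^(m-1) = cmod (lam * y i^(m-1))" using clam by (simp add: norm_mult norm_power z_def)
    also have "\<dots> = cmod (tmult m n A y i)" using eig i unfolding is_eigenpair_def by simp
    also have "\<dots> \<le> (\<Sum>js\<in>idx (m-1) n. cmod (complex_of_real (A (i#js)) * (\<Prod>t<m-1. y (js!t))))"
      unfolding tmult_def by (rule norm_sum)
    also have "\<dots> = Pr m n A z i" unfolding Pr_def using cterm[OF i] by simp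
    finally show ?thesis .
  qed
  have eqall: "Pr m n A z i = rho * z i^(m-1)" if i: "i<n" for i
  proof (rule ccontr)
    assume "Pr m n A z i \<noteq> rho * z i^(m-1)"
    then have st: "Pr m n A z i > rho * z i^(m-1)" using tri[OF i] by simp
    obtain w where w: "\<forall>i<n. w i > 0" "\<forall>i<n. Pr m n A w i > rho * w i^(m-1)"
      using strict_all[OF m A wi zpos _ i st] tri by blast
    define g where "g = Min ((\<lambda>i. Pr m n A w i / w i^(m-1)) ` {..<n})"
    have fin: "finite ((\<lambda>i. Pr m n A w i / w i^(m-1)) ` {..<n})"
      "(\<lambda>i. Pr m n A w i / w i^(m-1)) ` {..<n} \<noteq> {}" using n by (auto simp: lessThan_empty_iff)
    obtain k where k: "k < n" "g = Pr m n A w k / w k^(m-1)" using Min_in[OF fin] unfolding g_def by auto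
    have "g > rho" using k w by (simp add: pos_less_divide_eq)
    have gle: "Pr m n A w i \<ge> g * w i^(m-1)" if "i<n" for i
    proof -
      have "g \<le> Pr m n A w i / w i^(m-1)" unfolding g_def using fin that by auto
      then show ?thesis using w that by (simp add: pos_le_divide_eq)
    qed
    obtain x \<mu> where x: "\<forall>i<n. x i \<ge> 0" "\<exists>i<n. x i \<noteq> 0" "\<mu> \<ge> g" "\<forall>i<n. Pr m n A x i = \<mu> * x i^(m-1)"
      using exist_eig[OF m n A w(1)] gle by blast
    have "is_eigenpair m n A (complex_of_real \<mu>) (\<lambda>i. complex_of_real (x i))"
      unfolding is_eigenpair_def tmult_real using x by simp
    then have "cmod (complex_of_real \<mu>) \<le> rho" using eig_le_rho unfolding rho_def by blast
    then show False using x(3) \<open>g > rho\<close> rho0 by simp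
  qed
  show ?thesis
  proof
    fix e assume e: "e \<in> edges m n A"
    then have eidx: "e \<in> idx m n" and Ae: "A e \<noteq> 0" unfolding edges_def by auto
    obtain i "is" where eis: "e = i # is" using eidx m unfolding idx_def by (cases e) auto
    have i: "i < n" and isidx: "is \<in> idx (m-1) n" using eidx eis unfolding idx_def by auto
    have Apos: "A (i#is) > 0" using nonneg_entry[OF A m1 i isidx] Ae eis by simp
    have zprod: "(\<Prod>t<m-1. z (is!t)) > 0" using zpos idx_nth[OF isidx] by (intro prod_pos) auto
    have "A (i#is) * (\<Prod>t<m-1. z (is!t)) \<le> Pr m n A z i"
      unfolding Pr_def
    proof (rule member_le_sum[where f="\<lambda>js. A (i#js) * (\<Prod>t<m-1. z (js!t))"])
      fix js assume "js \<in> idx (m-1) n - {is}"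
      then have js: "js \<in> idx (m-1) n" by simp
      have "0 \<le> (\<Prod>t<m-1. z (js!t))"
        using zpos idx_nth[OF js] by (intro prod_nonneg) (auto simp: less_imp_le)
      then show "0 \<le> A (i#js) * (\<Prod>t<m-1. z (js!t))"
        using nonneg_entry[OF A m1 i js] by simp
    qed (use isidx finite_idx in auto)
    then have Pzpos: "Pr m n A z i > 0" using Apos zprod by (meson mult_pos_pos order_less_le_trans)
    then have rhopos: "rho > 0" using eqall[OF i] zpos i rho0
      by (metis mult_eq_0_iff order_le_less power_not_zero)
    define W where "W = (\<lambda>js. complex_of_real (A (i#js)) * (\<Prod>t<m-1. y (js!t)))"
    have sW: "sum W (idx (m-1) n) = lam * y i^(m-1)"
      using eig i unfolding is_eigenpair_def tmult_def W_def by simp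
    have csW: "cmod (sum W (idx (m-1) n)) = rho * z i^(m-1)"
      unfolding sW using clam by (simp add: norm_mult norm_power z_def)
    have "(\<Sum>js\<in>idx (m-1) n. cmod (W js)) = Pr m n A z i"
      unfolding Pr_def W_def using cterm[OF i] by simp
    then have eqW: "cmod (sum W (idx (m-1) n)) = (\<Sum>js\<in>idx (m-1) n. cmod (W js))"
      using csW eqall[OF i] by simp
    have nzW: "sum W (idx (m-1) n) \<noteq> 0" using csW rhopos zpos i by auto
    have ph: "W is = complex_of_real (cmod (W is)) * (sum W (idx (m-1) n) / complex_of_real (cmod (sum W (idx (m-1) n))))"
      by (rule phase_lemma[OF finite_idx eqW nzW isidx])
    define \<Theta> where "\<Theta> = (\<Sum>t<m-1. \<theta> (is!t))"
    have prody: "(\<Prod>t<m-1. y (is!t)) = complex_of_real (\<Prod>t<m-1. z (is!t)) * cis \<Theta>"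
    proof -
      have "(\<Prod>t<m-1. y (is!t)) = (\<Prod>t<m-1. complex_of_real (z (is!t)) * cis (\<theta> (is!t)))"
        using ypol idx_nth[OF isidx] by (intro prod.cong) auto
      also have "\<dots> = complex_of_real (\<Prod>t<m-1. z (is!t)) * cis \<Theta>"
        unfolding \<Theta>_def by (simp add: prod.distrib prod_cis)
      finally show ?thesis .
    qed
    define c1 where "c1 = A (i#is) * (\<Prod>t<m-1. z (is!t))"
    have c1pos: "c1 > 0" unfolding c1_def using Apos zprod by simp
    have Wis: "W is = complex_of_real c1 * cis \<Theta>" unfolding W_def prody c1_def by simp
    have cWis: "cmod (W is) = c1" using Wis c1pos by (simp add: norm_mult)
    have ratio: "sum W (idx (m-1) n) / complex_of_real (cmod (sum W (idx (m-1) n))) = cis a * cis (\<theta> i)^(m-1)"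
    proof -
      have "sum W (idx (m-1) n) = complex_of_real (rho * z i^(m-1)) * (cis a * cis (\<theta> i)^(m-1))"
        unfolding sW lam_def ypol[OF i] by (simp add: power_mult_distrib)
      moreover have "z i \<noteq> 0" using zpos i by (metis less_irrefl)
      ultimately show ?thesis unfolding csW using rhopos by simp
    qed
    have "W is = complex_of_real c1 * (cis a * cis (\<theta> i)^(m-1))"
      using ph unfolding ratio cWis .
    then have "complex_of_real c1 * cis \<Theta> = complex_of_real c1 * (cis a * cis (\<theta> i)^(m-1))"
      unfolding Wis .
    then have "cis \<Theta> = cis a * cis (\<theta> i)^(m-1)"
      using c1pos by (simp only: mult_left_cancel of_real_eq_0_iff)
    then have "cis (\<Theta> + \<theta> i) = cis a * cis (\<theta> i)^m"
      using m1 by (simp add: cis_mult[symmetric] power_eq_if)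
    also have "cis (\<theta> i)^m = 1"
    proof -
      have "cis (\<theta> i)^m = cis (real m * \<theta> i)" by (rule Complex.DeMoivre)
      also have "real m * \<theta> i = 2 * pi * real (\<phi> i)" using m by (simp add: \<theta>_def)
      finally show ?thesis using cis_multiple_2pi[of "real (\<phi> i)"] by simp
    qed
    finally have ceq: "cis (\<Theta> + \<theta> i) = cis a" by simp
    define Ssum where "Ssum = (\<Sum>k<m. \<phi> (e!k))"
    have Sdec: "Ssum = \<phi> i + (\<Sum>t<m-1. \<phi> (is!t))"
    proof -
      have "m = Suc (m-1)" using m by simp
      then have "Ssum = (\<Sum>k<Suc (m-1). \<phi> (e!k))" unfolding Ssum_def by simp
      also have "\<dots> = \<phi> (e!0) + (\<Sum>k<m-1. \<phi> (e!Suc k))" by (rule sum.lessThan_Suc_shift)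
      finally show ?thesis using eis by simp
    qed
    have "\<Theta> + \<theta> i = 2 * pi / real m * real Ssum"
      unfolding \<Theta>_def \<theta>_def Sdec by (simp add: sum_distrib_left sum_divide_distrib algebra_simps)
    then obtain N :: int where N: "2 * pi / real m * real Ssum = a + 2 * pi * of_int N"
      using cis_eq_int[OF ceq[unfolded \<open>\<Theta> + \<theta> i = 2 * pi / real m * real Ssum\<close>]] by blast
    have rr: "real Ssum * real l = real j * real m + of_int N * real m * real l"
    proof -
      have "2 * pi * (real Ssum / real m) = 2 * pi * (real j / real l + of_int N)"
        using N unfolding a_def by (simp add: algebra_simps)
      moreover have "2 * pi \<noteq> (0::real)" by simp
      ultimately have "real Ssum / real m = real j / real l + of_int N" using mult_left_cancel by blast
      then show ?thesis using m l by (simp add: field_simps)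
    qed
    have "Ssum mod m = (m * j div l) mod m" by (rule final_arith[OF _ _ rr]) (use m l in auto)
    then show "(\<Sum>i<n. incid m e i * \<phi> i) mod m = (m * j div l) mod m"
      using sum_incid[OF eidx, of \<phi>] unfolding Ssum_def by simp
  qed
qed

end
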